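(* Let $n,x$ be integers with $1<x<n$, so that $G=C_{2n}(x,1,n)$ is a $5$-regular circulant graph. If $x=\tfrac{n}{2}$, then $G$ is word-representable and $R(G)\leq 5$.
   Context: Two distinct letters $x,y$ alternate in a word $w$ if, after deleting all other letters from $w$, the resulting word is of the form $xyxy\cdots$ or $yxyx\cdots$ (of even or odd length). A graph $G=(V,E)$ is word-representable if there is a word $w$ over the alphabet $V$, containing every letter of $V$ at least once, such that for all distinct $x,y\in V$, $xy\in E$ if and only if $x$ and $y$ alternate in $w$. A word is $k$-uniform if every letter occurs in it exactly $k$ times; $G$ is $k$-representable if some $k$-uniform word represents it, and the representation number $R(G)$ of a word-representable graph $G$ is the least such $k$. For an integer $m$ and a set $R$ of positive integers each at most $m/2$, the circulant graph $C_m(R)$ has vertex set $\{0,1,\dots,m-1\}$, with $i$ and $j$ adjacent iff $\min(|i-j|,\,m-|i-j|)\in R$. $C_{2n}(x,1,n)$ denotes the circulant graph on $2n$ vertices with jump set $\{1,x,n\}$; it is $5$-regular exactly when $1<x<n$. *)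

theory Defs
  imports Main
begin

definition alternates :: "'a list \<Rightarrow> 'a \<Rightarrow> 'a \<Rightarrow> bool" where
  "alternates w x y \<longleftrightarrow>
     (let u = filter (\<lambda>z. z = x \<or> z = y) w in
        \<forall>i. Suc i < length u \<longrightarrow> u ! i \<noteq> u ! Suc i)"

definition represents :: "'a set \<Rightarrow> ('a \<Rightarrow> 'a \<Rightarrow> bool) \<Rightarrow> 'a list \<Rightarrow> bool" where
  "represents V E w \<longleftrightarrow> set w = V \<and>
     (\<forall>x\<in>V. \<forall>y\<in>V. x \<noteq> y \<longrightarrow> (E x y \<longleftrightarrow> alternates w x y))"

definition word_representable :: "'a set \<Rightarrow> ('a \<Rightarrow> 'a \<Rightarrow> bool) \<Rightarrow> bool" where
  "word_representable V E \<longleftrightarrow> (\<exists>w. represents V E w)"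

definition k_uniform :: "nat \<Rightarrow> 'a list \<Rightarrow> bool" where
  "k_uniform k w \<longleftrightarrow> (\<forall>a\<in>set w. count_list w a = k)"

definition k_representable :: "nat \<Rightarrow> 'a set \<Rightarrow> ('a \<Rightarrow> 'a \<Rightarrow> bool) \<Rightarrow> bool" where
  "k_representable k V E \<longleftrightarrow> (\<exists>w. k_uniform k w \<and> represents V E w)"

definition rep_number :: "'a set \<Rightarrow> ('a \<Rightarrow> 'a \<Rightarrow> bool) \<Rightarrow> nat" where
  "rep_number V E = (LEAST k. k_representable k V E)"

definition circ_vertices :: "nat \<Rightarrow> nat set" where
  "circ_vertices m = {0..<m}"

definition circ_adj :: "nat \<Rightarrow> nat set \<Rightarrow> nat \<Rightarrow> nat \<Rightarrow> bool" where
  "circ_adj m R i j \<longleftrightarrow> i < m \<and> j < m \<and>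
     (let d = (if i \<le> j then j - i else i - j) in min d (m - d) \<in> R)"

end

theory Submission
  imports Defs
begin

definition Bet :: "'a list \<Rightarrow> ('a \<Rightarrow> bool) \<Rightarrow> bool" where
  "Bet w Q \<longleftrightarrow> (\<forall>p q. p<q \<longrightarrow> q<length w \<longrightarrow> w!p = w!q \<longrightarrow> Q (w!p) \<longrightarrow>
      (\<exists>l. p<l \<and> l<q \<and> Q (w!l) \<and> w!l \<noteq> w!p))"

lemma Bet_Nil: "Bet [] Q" by (simp add: Bet_def)

lemma Bet_Cons_notQ: "\<not> Q c \<Longrightarrow> Bet (c#w) Q \<longleftrightarrow> Bet w Q"
proof
  assume nq: "\<not> Q c" and h: "Bet (c#w) Q"
  show "Bet w Q" unfolding Bet_def
  proof (intro allI impI)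
    fix p q assume a: "p<q" "q<length w" "w!p = w!q" "Q (w!p)"
    then have "\<exists>l. Suc p<l \<and> l<Suc q \<and> Q ((c#w)!l) \<and> (c#w)!l \<noteq> (c#w)!Suc p"
      using h unfolding Bet_def by (metis Suc_less_eq length_Cons nth_Cons_Suc)
    then obtain l where "Suc p<l" "l<Suc q" "Q ((c#w)!l)" "(c#w)!l \<noteq> (c#w)!Suc p" by blast
    then show "\<exists>l. p<l \<and> l<q \<and> Q (w!l) \<and> w!l \<noteq> w!p"
      by (intro exI[of _ "l - 1"]) (cases l, auto)
  qed
next
  assume nq: "\<not> Q c" and h: "Bet w Q"
  show "Bet (c#w) Q" unfolding Bet_def
  proof (intro allI impI)
    fix p q assume a: "p<q" "q<length (c#w)" "(c#w)!p = (c#w)!q" "Q ((c#w)!p)"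
    then obtain p' q' where pq: "p = Suc p'" "q = Suc q'" using nq
      by (metis gr0_implies_Suc less_nat_zero_code nth_Cons_0 not0_implies_Suc)
    then have "\<exists>l. p'<l \<and> l<q' \<and> Q (w!l) \<and> w!l \<noteq> w!p'"
      using h a unfolding Bet_def by auto
    then obtain l where "p'<l \<and> l<q' \<and> Q (w!l) \<and> w!l \<noteq> w!p'" by blast
    then show "\<exists>l. p<l \<and> l<q \<and> Q ((c#w)!l) \<and> (c#w)!l \<noteq> (c#w)!p"
      using pq by (intro exI[of _ "Suc l"]) auto
  qed
qed

lemma Bet_Cons_Q:
  assumes qc: "Q c"
  shows "Bet (c#w) Q \<longleftrightarrow> Bet w Q \<and> (\<forall>q<length w. w!q = c \<longrightarrow> (\<exists>l<q. Q (w!l) \<and> w!l \<noteq> c))"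
proof
  assume h: "Bet (c#w) Q"
  have "Bet w Q" unfolding Bet_def
  proof (intro allI impI)
    fix p q assume a: "p<q" "q<length w" "w!p = w!q" "Q (w!p)"
    then have "\<exists>l. Suc p<l \<and> l<Suc q \<and> Q ((c#w)!l) \<and> (c#w)!l \<noteq> (c#w)!Suc p"
      using h unfolding Bet_def by (metis Suc_less_eq length_Cons nth_Cons_Suc)
    then obtain l where "Suc p<l" "l<Suc q" "Q ((c#w)!l)" "(c#w)!l \<noteq> (c#w)!Suc p" by blast
    then show "\<exists>l. p<l \<and> l<q \<and> Q (w!l) \<and> w!l \<noteq> w!p"
      by (intro exI[of _ "l - 1"]) (cases l, auto)
  qed
  moreover have "\<forall>q<length w. w!q = c \<longrightarrow> (\<exists>l<q. Q (w!l) \<and> w!l \<noteq> c)"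
  proof (intro allI impI)
    fix q assume a: "q < length w" "w!q = c"
    then have "\<exists>l. 0<l \<and> l<Suc q \<and> Q ((c#w)!l) \<and> (c#w)!l \<noteq> (c#w)!0"
      using h qc unfolding Bet_def
      by (metis length_Cons not_less_eq nth_Cons_0 nth_Cons_Suc zero_less_Suc)
    then obtain l where "0<l" "l<Suc q" "Q ((c#w)!l)" "(c#w)!l \<noteq> c" by auto
    then show "\<exists>l<q. Q (w!l) \<and> w!l \<noteq> c"
      by (intro exI[of _ "l - 1"]) (cases l, auto)
  qed
  ultimately show "Bet w Q \<and> (\<forall>q<length w. w!q = c \<longrightarrow> (\<exists>l<q. Q (w!l) \<and> w!l \<noteq> c))" by blast
next
  assume h: "Bet w Q \<and> (\<forall>q<length w. w!q = c \<longrightarrow> (\<exists>l<q. Q (w!l) \<and> w!l \<noteq> c))"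
  show "Bet (c#w) Q" unfolding Bet_def
  proof (intro allI impI)
    fix p q assume a: "p<q" "q<length (c#w)" "(c#w)!p = (c#w)!q" "Q ((c#w)!p)"
    obtain q' where q': "q = Suc q'" using a(1) by (cases q) auto
    show "\<exists>l. p<l \<and> l<q \<and> Q ((c#w)!l) \<and> (c#w)!l \<noteq> (c#w)!p"
    proof (cases p)
      case 0
      then have "w!q' = c" "q' < length w" using a q' by auto
      then obtain l where "l<q'" "Q (w!l)" "w!l \<noteq> c" using h by blast
      then show ?thesis using 0 q' by (intro exI[of _ "Suc l"]) auto
    next
      case (Suc p')
      then have "\<exists>l. p'<l \<and> l<q' \<and> Q (w!l) \<and> w!l \<noteq> w!p'"
        using h a q' unfolding Bet_def by auto
      then obtain l where "p'<l \<and> l<q' \<and> Q (w!l) \<and> w!l \<noteq> w!p'" by blast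
      then show ?thesis using Suc q' by (intro exI[of _ "Suc l"]) auto
    qed
  qed
qed

lemma succ_filter_Bet: "successively (\<noteq>) (filter Q w) \<longleftrightarrow> Bet w Q"
proof (induction w)
  case Nil then show ?case by (simp add: Bet_Nil)
next
  case (Cons c w)
  show ?case
  proof (cases "Q c")
    case False then show ?thesis using Cons Bet_Cons_notQ[of Q c w, OF False] by simp
  next
    case True
    have key: "(filter Q w = [] \<or> c \<noteq> hd (filter Q w)) \<longleftrightarrow>
       (\<forall>q<length w. w!q = c \<longrightarrow> (\<exists>l<q. Q (w!l) \<and> w!l \<noteq> c))"
    proof (cases "filter Q w")
      case Nil
      then have "\<forall>q<length w. \<not> Q (w!q)" by (metis filter_empty_conv nth_mem)
      then show ?thesis using Nil True by auto
    next
      case (Cons y ys)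
      then obtain us vs where d: "w = us @ y # vs" "\<forall>u\<in>set us. \<not> Q u" "Q y"
        by (auto dest: filter_eq_ConsD)
      show ?thesis
      proof (cases "y = c")
        case True
        have e1: "w ! length us = c" using d True by simp
        have e2: "\<not>(\<exists>l<length us. Q (w!l) \<and> w!l \<noteq> c)"
          using d by (auto simp: nth_append)
        have "\<not> (\<forall>q<length w. w!q = c \<longrightarrow> (\<exists>l<q. Q (w!l) \<and> w!l \<noteq> c))"
        proof
          assume H: "\<forall>q<length w. w!q = c \<longrightarrow> (\<exists>l<q. Q (w!l) \<and> w!l \<noteq> c)"
          have "length us < length w" using d by simp
          then have "\<exists>l<length us. Q (w!l) \<and> w!l \<noteq> c" using H e1 by blast
          then show False using e2 by blast
        qed
        then show ?thesis using Cons True by auto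
      next
        case False
        have "\<exists>l<q. Q (w!l) \<and> w!l \<noteq> c" if "q<length w" "w!q = c" for q
        proof -
          have "\<not> q < length us" using that d True by (metis nth_append nth_mem)
          moreover have "q \<noteq> length us" using that d False by auto
          ultimately show ?thesis using d False by (intro exI[of _ "length us"]) auto
        qed
        then show ?thesis using Cons False by auto
      qed
    qed
    have s1: "successively (\<noteq>) (filter Q (c#w)) \<longleftrightarrow>
       (filter Q w = [] \<or> c \<noteq> hd (filter Q w)) \<and> successively (\<noteq>) (filter Q w)"
      using True by (cases "filter Q w") (simp_all add: successively_Cons)
    show ?thesis unfolding s1 key Cons.IH Bet_Cons_Q[of Q c w, OF True] by blast
  qed
qed

lemma alternates_Bet: "alternates w a b \<longleftrightarrow> Bet w (\<lambda>z. z = a \<or> z = b)"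
  unfolding alternates_def Let_def
  using successively_conv_nth[of "(\<noteq>)" "filter (\<lambda>z. z = a \<or> z = b) w"]
    succ_filter_Bet[of "\<lambda>z. z = a \<or> z = b" w] by simp

lemma alt_list:
  assumes "set u \<subseteq> {a,b}" "a \<noteq> b" "successively (\<noteq>) u" "u \<noteq> []"
  shows "(last u = hd u \<longleftrightarrow> odd (length u)) \<and>
         count_list u (hd u) = count_list u (if hd u = a then b else a) + (if odd (length u) then 1 else 0)"
  using assms
proof (induction u)
  case Nil then show ?case by simp
next
  case (Cons c v)
  show ?case
  proof (cases "v = []")
    case True then show ?thesis using Cons.prems by auto
  next
    case False
    have sv: "successively (\<noteq>) v" and hv: "hd v \<noteq> c"
      using Cons.prems(3) False by (auto simp: successively_Cons)
    have IH: "(last v = hd v \<longleftrightarrow> odd (length v)) \<and>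
         count_list v (hd v) = count_list v (if hd v = a then b else a) + (if odd (length v) then 1 else 0)"
      using Cons.IH Cons.prems sv False by auto
    have cin: "c \<in> {a,b}" "hd v \<in> {a,b}" "last v \<in> {a,b}"
      using Cons.prems(1) False by (auto simp: subset_iff)
    define oth where "oth = (if c = a then b else a)"
    have ho: "hd v = oth" using cin hv unfolding oth_def by auto
    have oc: "(if oth = a then b else a) = c" using cin assms(2) unfolding oth_def by auto
    have lv: "last v = c \<longleftrightarrow> last v \<noteq> oth" using cin assms(2) unfolding oth_def by auto
    have co: "c \<noteq> oth" using cin assms(2) unfolding oth_def by auto
    have IH1: "last v = oth \<longleftrightarrow> odd (length v)" using IH ho by simp
    have IH2: "count_list v oth = count_list v c + (if odd (length v) then 1 else 0)"
      using IH ho oc by simp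
    have g1: "last (c#v) = hd (c#v) \<longleftrightarrow> odd (length (c#v))"
      using False lv IH1 by simp
    have g2: "count_list (c#v) (hd (c#v)) = count_list (c#v) (if hd (c#v) = a then b else a)
         + (if odd (length (c#v)) then 1 else 0)"
      using IH2 co by (simp add: oth_def[symmetric])
    show ?thesis using g1 g2 by blast
  qed
qed

lemma alt_even:
  assumes "set u \<subseteq> {a,b}" "a \<noteq> b" "successively (\<noteq>) u" "u \<noteq> []" "count_list u a = count_list u b"
  shows "last u \<noteq> hd u"
proof -
  have "hd u \<in> {a,b}" using assms(1,4) hd_in_set by blast
  then show ?thesis using alt_list[OF assms(1-4)] assms(2,5) by (auto split: if_splits)
qed

lemma succ_rotate1:
  assumes "set u \<subseteq> {a,b}" "a \<noteq> b" "count_list u a = count_list u b"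
  shows "successively (\<noteq>) (rotate1 u) \<longleftrightarrow> successively (\<noteq>) u"
proof (cases u)
  case Nil then show ?thesis by simp
next
  case (Cons c v)
  have cab: "c \<in> {a,b}" using assms(1) Cons by auto
  have vne: "v \<noteq> []" using assms Cons cab by auto
  show ?thesis
  proof
    assume h: "successively (\<noteq>) (rotate1 u)"
    have s2: "set (v @ [c]) \<subseteq> {a,b}" "count_list (v@[c]) a = count_list (v@[c]) b"
      using assms Cons by auto
    have "last (v@[c]) \<noteq> hd (v@[c])"
      using alt_even[OF s2(1) assms(2) _ _ s2(2)] h Cons by simp
    then have "hd v \<noteq> c" using vne by simp
    moreover have "successively (\<noteq>) v" using h Cons by (simp add: successively_append_iff)
    ultimately show "successively (\<noteq>) u" using Cons vne by (simp add: successively_Cons)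
  next
    assume h: "successively (\<noteq>) u"
    have "last u \<noteq> hd u" using alt_even[OF assms(1,2) h _ assms(3)] Cons by simp
    then have "last v \<noteq> c" using Cons vne by simp
    moreover have "successively (\<noteq>) v" using h Cons by (auto simp: successively_Cons)
    ultimately show "successively (\<noteq>) (rotate1 u)" using Cons vne
      by (simp add: successively_append_iff)
  qed
qed

lemma alternates_succ: "alternates w a b \<longleftrightarrow> successively (\<noteq>) (filter (\<lambda>z. z = a \<or> z = b) w)"
  unfolding alternates_def Let_def
  using successively_conv_nth[of "(\<noteq>)" "filter (\<lambda>z. z = a \<or> z = b) w"] by simp

lemma count_filter_ab: "z = a \<or> z = b \<Longrightarrow> count_list (filter (\<lambda>z. z = a \<or> z = b) w) z = count_list w z"
  by (induction w) auto

lemma count_rotate1: "count_list (rotate1 w) z = count_list w z"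
  by (cases w) auto

lemma count_rotate: "count_list (rotate n w) z = count_list w z"
  by (induction n) (auto simp: count_rotate1)

lemma alt_rotate1:
  assumes "a \<noteq> b" "count_list w a = count_list w b"
  shows "alternates (rotate1 w) a b \<longleftrightarrow> alternates w a b"
proof (cases w)
  case Nil then show ?thesis by simp
next
  case (Cons c v)
  let ?Q = "\<lambda>z. z = a \<or> z = b"
  have st: "set (filter ?Q w) \<subseteq> {a,b}" by auto
  have ct: "count_list (filter ?Q w) a = count_list (filter ?Q w) b"
    using assms(2) count_filter_ab[of a a b w] count_filter_ab[of b a b w] by simp
  show ?thesis
  proof (cases "?Q c")
    case True
    have "filter ?Q (rotate1 w) = rotate1 (filter ?Q w)" using Cons True by simp
    then show ?thesis unfolding alternates_succ using succ_rotate1[OF st assms(1) ct] by simp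
  next
    case False
    have "filter ?Q (rotate1 w) = filter ?Q w" using Cons False by simp
    then show ?thesis unfolding alternates_succ by simp
  qed
qed

lemma alt_rotate:
  assumes "a \<noteq> b" "count_list w a = count_list w b"
  shows "alternates (rotate n w) a b \<longleftrightarrow> alternates w a b"
proof (induction n)
  case 0 then show ?case by simp
next
  case (Suc n)
  have "count_list (rotate n w) a = count_list (rotate n w) b" using assms(2) by (simp add: count_rotate)
  then show ?case using alt_rotate1[OF assms(1)] Suc by simp
qed

lemma alt_map:
  assumes "inj_on s (insert a (insert b (set w)))"
  shows "alternates (map s w) (s a) (s b) \<longleftrightarrow> alternates w a b"
proof -
  let ?Q = "\<lambda>z. z = a \<or> z = b"
  have inj: "\<And>y z. y \<in> insert a (insert b (set w)) \<Longrightarrow> z \<in> insert a (insert b (set w)) \<Longrightarrow> s y = s z \<longleftrightarrow> y = z"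
    by (rule inj_on_eq_iff[OF assms])
  have "filter (\<lambda>z. z = s a \<or> z = s b) (map s w) = map s (filter ?Q w)"
    unfolding filter_map o_def
    by (rule arg_cong[where f="map s"], rule filter_cong) (auto simp: inj)
  then have "alternates (map s w) (s a) (s b) \<longleftrightarrow> successively (\<lambda>x y. s x \<noteq> s y) (filter ?Q w)"
    unfolding alternates_succ by (simp add: successively_map)
  also have "\<dots> \<longleftrightarrow> successively (\<noteq>) (filter ?Q w)"
    by (rule successively_cong) (auto simp: inj)
  finally show ?thesis unfolding alternates_succ .
qed

definition pos :: "nat \<Rightarrow> nat \<Rightarrow> nat" where "pos u t = 5*u+t"

definition offs :: "nat \<Rightarrow> nat \<Rightarrow> nat" where
  "offs x t = (if t=0 then 0 else if t=1 then x else if t=2 then 2*x else if t=3 then 4*x-1 else 3*x)"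

definition fw :: "nat \<Rightarrow> nat \<Rightarrow> nat" where
  "fw x p = (p div 5 + offs x (p mod 5)) mod (4*x)"

definition W :: "nat \<Rightarrow> nat list" where
  "W x = map (fw x) [0..<20*x]"

definition Occ :: "nat \<Rightarrow> nat \<Rightarrow> nat set" where
  "Occ x a = {pos a 0, pos (if x \<le> a then a-x else a+3*x) 1, pos (if 2*x \<le> a then a-2*x else a+2*x) 2,
            pos (if a+1 < 4*x then a+1 else 0) 3, pos (if 3*x \<le> a then a-3*x else a+x) 4}"

definition Cnd :: "nat set \<Rightarrow> nat set \<Rightarrow> bool" where
 "Cnd A B \<longleftrightarrow> (\<forall>p\<in>A. \<forall>q\<in>A. p<q \<longrightarrow> (\<exists>l\<in>B. p<l \<and> l<q))"

lemma pos_less: "t < 5 \<Longrightarrow> s < 5 \<Longrightarrow> pos u t < pos v s \<longleftrightarrow> (u < v \<or> u = v \<and> t < s)"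
  unfolding pos_def by presburger

lemma pos_eq: "t < 5 \<Longrightarrow> s < 5 \<Longrightarrow> pos u t = pos v s \<longleftrightarrow> (u = v \<and> t = s)"
  unfolding pos_def by presburger

lemma mod_lt2: "(y::nat) < 2*m \<Longrightarrow> y mod m = (if y < m then y else y - m)"
  by (simp add: le_mod_geq)

lemma occ_iff: assumes "p < 20*x" "2 \<le> x" "a < 4*x"
  shows "fw x p = a \<longleftrightarrow> p \<in> Occ x a"
proof -
  define u t where "u = p div 5" and "t = p mod 5"
  have p: "p = pos u t" "t < 5" "u < 4*x" using assms unfolding u_def t_def pos_def by auto
  have of: "offs x t < 4*x" using assms by (auto simp: offs_def)
  have fw: "fw x p = (if u + offs x t < 4*x then u + offs x t else u + offs x t - 4*x)"
    unfolding fw_def u_def[symmetric] t_def[symmetric] using of p(3) by (intro mod_lt2) auto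
  have "t = 0 \<or> t = 1 \<or> t = 2 \<or> t = 3 \<or> t = 4" using p by auto
  then show ?thesis
    unfolding fw Occ_def using assms p
    by (elim disjE) (simp_all add: pos_eq offs_def; arith)+
qed

lemma Occ_lt: assumes "2 \<le> x" "a < 4*x" "p \<in> Occ x a" shows "p < 20*x"
  using assms unfolding Occ_def pos_def by (auto split: if_splits)

lemma len_W: "length (W x) = 20*x" by (simp add: W_def)

lemma nth_W: "i < 20*x \<Longrightarrow> W x ! i = fw x i" by (simp add: W_def)

lemma Pset: assumes "2 \<le> x" "a < 4*x"
  shows "{p. p < length (W x) \<and> W x ! p = a} = Occ x a"
proof -
  have e: "(p < 20*x \<and> W x ! p = a) \<longleftrightarrow> p \<in> Occ x a" for p
  proof (cases "p < 20*x")
    case True then show ?thesis using occ_iff[OF True assms(1,2)] nth_W[OF True] by simp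
  next
    case False then show ?thesis using Occ_lt[OF assms] by blast
  qed
  show ?thesis unfolding len_W using e by blast
qed

lemma alt_Cnd: assumes "a \<noteq> b"
  shows "alternates w a b \<longleftrightarrow> Cnd {p. p < length w \<and> w!p = a} {p. p < length w \<and> w!p = b}
                              \<and> Cnd {p. p < length w \<and> w!p = b} {p. p < length w \<and> w!p = a}"
  unfolding alternates_Bet Bet_def Cnd_def using assms
  by (auto; metis less_trans)

lemma count_conv: "count_list w a = card {p. p < length w \<and> w!p = a}"
proof -
  have "count_list w a = length (filter (\<lambda>y. y = a) w)" by (induction w) auto
  then show ?thesis by (simp add: length_filter_conv_card)
qed

lemma card_Occ: "card (Occ x a) = 5"
  unfolding Occ_def by (simp add: pos_eq)

lemma count_W: assumes "2 \<le> x" "a < 4*x" shows "count_list (W x) a = 5"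
  using count_conv Pset[OF assms] card_Occ by metis

lemma set_W: assumes "2 \<le> x" shows "set (W x) = {0..<4*x}"
proof
  show "set (W x) \<subseteq> {0..<4*x}" using assms by (auto simp: W_def fw_def)
  show "{0..<4*x} \<subseteq> set (W x)"
  proof
    fix a assume "a \<in> {0..<4*x}"
    then have "a < 4*x" by simp
    then have "fw x (5*a) = a" "5*a < 20*x" by (auto simp: fw_def offs_def)
    then show "a \<in> set (W x)" unfolding W_def by (metis atLeastLessThan_iff image_eqI le0 set_map set_upt)
  qed
qed

lemma W_rot: assumes "2 \<le> x"
  shows "rotate (5*k) (W x) = map (\<lambda>v. (v+k) mod (4*x)) (W x)"
proof (rule nth_equalityI)
  show "length (rotate (5*k) (W x)) = length (map (\<lambda>v. (v+k) mod (4*x)) (W x))" by simp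
  fix i assume "i < length (rotate (5*k) (W x))"
  then have i: "i < 20*x" by (simp add: len_W)
  have j: "(5*k + i) mod (20*x) = 5 * ((k + i div 5) mod (4*x)) + i mod 5"
  proof -
    have "(5*k + i) mod (5*(4*x)) = 5 * ((5*k+i) div 5 mod (4*x)) + (5*k+i) mod 5"
      by (rule mod_mult2_eq)
    then show ?thesis by simp
  qed
  have "rotate (5*k) (W x) ! i = W x ! ((5*k + i) mod (20*x))"
    using i by (simp add: nth_rotate len_W)
  also have "\<dots> = fw x ((5*k + i) mod (20*x))" using assms by (intro nth_W) simp
  also have "\<dots> = ((k + i div 5) mod (4*x) + offs x (i mod 5)) mod (4*x)"
    unfolding fw_def j by simp
  also have "\<dots> = (fw x i + k) mod (4*x)"
  proof -
    have e1: "((k + i div 5) mod (4*x) + offs x (i mod 5)) mod (4*x) = (k + i div 5 + offs x (i mod 5)) mod (4*x)"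
      by (rule mod_add_left_eq)
    have e2: "((i div 5 + offs x (i mod 5)) mod (4*x) + k) mod (4*x) = (i div 5 + offs x (i mod 5) + k) mod (4*x)"
      by (rule mod_add_left_eq)
    have e3: "k + i div 5 + offs x (i mod 5) = i div 5 + offs x (i mod 5) + k" by simp
    show ?thesis unfolding fw_def e1 e2 e3 ..
  qed
  finally show "rotate (5*k) (W x) ! i = map (\<lambda>v. (v+k) mod (4*x)) (W x) ! i"
    using i by (simp add: len_W nth_W)
qed

lemma shift_inj: assumes "a < (m::nat)" shows "inj_on (\<lambda>v. (v+a) mod m) {0..<m}"
proof (rule inj_onI)
  fix v v' assume v: "v \<in> {0..<m}" "v' \<in> {0..<m}" "(v+a) mod m = (v'+a) mod m"
  have e1: "(v+a) mod m = (if v + a < m then v + a else v + a - m)"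
    using v assms by (intro mod_lt2) auto
  have e2: "(v'+a) mod m = (if v' + a < m then v' + a else v' + a - m)"
    using v assms by (intro mod_lt2) auto
  have "(if v + a < m then v + a else v + a - m) = (if v' + a < m then v' + a else v' + a - m)"
    using v(3) e1 e2 by simp
  then show "v = v'" using v assms by (simp split: if_split_asm)
qed

lemma alt_shift: assumes "2 \<le> x" "a < 4*x" "b < 4*x" "a \<noteq> b"
  shows "alternates (W x) a b \<longleftrightarrow> alternates (W x) 0 ((b + 4*x - a) mod (4*x))"
proof -
  define s where "s = (\<lambda>v. (v+a) mod (4*x))"
  define d where "d = (b + 4*x - a) mod (4*x)"
  have d_lt: "d < 4*x" using assms unfolding d_def by simp
  have s0: "s 0 = a" using assms unfolding s_def by simp
  have sd: "s d = b"
  proof -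
    have "s d = ((b + 4*x - a) mod (4*x) + a) mod (4*x)" unfolding s_def d_def ..
    also have "\<dots> = (b + 4*x - a + a) mod (4*x)" by (rule mod_add_left_eq)
    also have "b + 4*x - a + a = b + 4*x" using assms by simp
    finally show ?thesis using assms by simp
  qed
  have sub: "insert 0 (insert d (set (W x))) \<subseteq> {0..<4*x}"
    using set_W[OF assms(1)] d_lt assms(1) by auto
  have inj2: "inj_on s (insert 0 (insert d (set (W x))))"
    unfolding s_def by (rule inj_on_subset[OF shift_inj[OF assms(2)] sub])
  have c: "count_list (W x) a = count_list (W x) b"
    using count_W[OF assms(1,2)] count_W[OF assms(1,3)] by simp
  have "alternates (W x) a b \<longleftrightarrow> alternates (rotate (5*a) (W x)) a b"
    using alt_rotate[OF assms(4) c, of "5*a"] by (rule sym)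
  also have "rotate (5*a) (W x) = map s (W x)"
    unfolding s_def by (rule W_rot[OF assms(1)])
  also have "alternates (map s (W x)) a b \<longleftrightarrow> alternates (map s (W x)) (s 0) (s d)"
    unfolding s0 sd ..
  also have "\<dots> \<longleftrightarrow> alternates (W x) 0 d" by (rule alt_map[OF inj2])
  finally show ?thesis unfolding d_def .
qed

abbreviation "A0 x \<equiv> {pos 0 0, pos 1 3, pos x 4, pos (2*x) 2, pos (3*x) 1}"

lemma Occ0: "2 \<le> x \<Longrightarrow> Occ x 0 = A0 x"
  unfolding Occ_def by auto

lemma r0: assumes "2 \<le> x" "1 \<le> d" "d < x"
  shows "(Cnd (A0 x) {pos d 0, pos (d+3*x) 1, pos (d+2*x) 2, pos (d+1) 3, pos (d+x) 4} \<and>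
          Cnd {pos d 0, pos (d+3*x) 1, pos (d+2*x) 2, pos (d+1) 3, pos (d+x) 4} (A0 x)) \<longleftrightarrow> d = 1"
  using assms unfolding Cnd_def by (simp add: pos_less) presburger

lemma r1: assumes "2 \<le> x" "e < x"
  shows "(Cnd (A0 x) {pos (x+e) 0, pos e 1, pos (e+3*x) 2, pos (x+e+1) 3, pos (e+2*x) 4} \<and>
          Cnd {pos (x+e) 0, pos e 1, pos (e+3*x) 2, pos (x+e+1) 3, pos (e+2*x) 4} (A0 x)) \<longleftrightarrow> e = 0"
  using assms unfolding Cnd_def by (simp add: pos_less) presburger

lemma r2: assumes "2 \<le> x" "e < x"
  shows "(Cnd (A0 x) {pos (2*x+e) 0, pos (x+e) 1, pos e 2, pos (2*x+e+1) 3, pos (3*x+e) 4} \<and>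
          Cnd {pos (2*x+e) 0, pos (x+e) 1, pos e 2, pos (2*x+e+1) 3, pos (3*x+e) 4} (A0 x)) \<longleftrightarrow> e = 0"
  using assms unfolding Cnd_def by (simp add: pos_less) presburger

lemma r3: assumes "2 \<le> x" "e + 1 < x"
  shows "(Cnd (A0 x) {pos (3*x+e) 0, pos (2*x+e) 1, pos (x+e) 2, pos (3*x+e+1) 3, pos e 4} \<and>
          Cnd {pos (3*x+e) 0, pos (2*x+e) 1, pos (x+e) 2, pos (3*x+e+1) 3, pos e 4} (A0 x)) \<longleftrightarrow> e = 0"
  using assms unfolding Cnd_def by (simp add: pos_less) presburger

lemma r4: assumes "1 \<le> y"
  shows "(Cnd (A0 (y+1)) {pos (4*y+3) 0, pos (3*y+2) 1, pos (2*y+1) 2, pos 0 3, pos y 4} \<and>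
          Cnd {pos (4*y+3) 0, pos (3*y+2) 1, pos (2*y+1) 2, pos 0 3, pos y 4} (A0 (y+1)))"
  using assms unfolding Cnd_def by (simp add: pos_less) arith

lemma zc_first: assumes "2 \<le> x" "0 < d" "d < 4*x"
  shows "alternates (W x) 0 d \<longleftrightarrow> Cnd (A0 x) (Occ x d) \<and> Cnd (Occ x d) (A0 x)"
proof -
  have x0: "0 < 4*x" using assms by simp
  have d0: "(0::nat) \<noteq> d" using assms by simp
  have "alternates (W x) 0 d \<longleftrightarrow> Cnd {p. p < length (W x) \<and> W x ! p = 0} {p. p < length (W x) \<and> W x ! p = d}
          \<and> Cnd {p. p < length (W x) \<and> W x ! p = d} {p. p < length (W x) \<and> W x ! p = 0}"
    by (rule alt_Cnd[OF d0])
  also have "{p. p < length (W x) \<and> W x ! p = 0} = A0 x"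
    using Pset[OF assms(1) x0] Occ0[OF assms(1)] by simp
  also have "{p. p < length (W x) \<and> W x ! p = d} = Occ x d"
    using Pset[OF assms(1,3)] .
  finally show ?thesis .
qed

lemma zc0: assumes "2 \<le> x" "0 < d" "d < x"
  shows "Cnd (A0 x) (Occ x d) \<and> Cnd (Occ x d) (A0 x) \<longleftrightarrow> d = 1"
proof -
  have i1: "(if x \<le> d then d - x else d + 3*x) = d+3*x" using assms by simp
  have i2: "(if 2*x \<le> d then d - 2*x else d + 2*x) = d+2*x" using assms by simp
  have i3: "(if d + 1 < 4*x then d + 1 else 0) = d+1" using assms by simp
  have i4: "(if 3*x \<le> d then d - 3*x else d + x) = d+x" using assms by simp
  have o: "Occ x d = {pos d 0, pos (d+3*x) 1, pos (d+2*x) 2, pos (d+1) 3, pos (d+x) 4}"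
    by (simp only: Occ_def i1 i2 i3 i4)
  have "1 \<le> d" using assms by simp
  then show ?thesis unfolding o using r0[OF assms(1) _ assms(3)] by blast
qed

lemma zc1: assumes "2 \<le> x" "e < x"
  shows "Cnd (A0 x) (Occ x (x+e)) \<and> Cnd (Occ x (x+e)) (A0 x) \<longleftrightarrow> e = 0"
proof -
  have i1: "(if x \<le> x+e then x+e - x else x+e + 3*x) = e" using assms by simp
  have i2: "(if 2*x \<le> x+e then x+e - 2*x else x+e + 2*x) = e+3*x" using assms by simp
  have i3: "(if x+e + 1 < 4*x then x+e + 1 else 0) = x+e+1" using assms by simp
  have i4: "(if 3*x \<le> x+e then x+e - 3*x else x+e + x) = e+2*x" using assms by simp
  have o: "Occ x (x+e) = {pos (x+e) 0, pos e 1, pos (e+3*x) 2, pos (x+e+1) 3, pos (e+2*x) 4}"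
    by (simp only: Occ_def i1 i2 i3 i4)
  show ?thesis unfolding o using r1[OF assms] by blast
qed

lemma zc2: assumes "2 \<le> x" "e < x"
  shows "Cnd (A0 x) (Occ x (2*x+e)) \<and> Cnd (Occ x (2*x+e)) (A0 x) \<longleftrightarrow> e = 0"
proof -
  have i1: "(if x \<le> 2*x+e then 2*x+e - x else 2*x+e + 3*x) = x+e" using assms by simp
  have i2: "(if 2*x \<le> 2*x+e then 2*x+e - 2*x else 2*x+e + 2*x) = e" using assms by simp
  have i3: "(if 2*x+e + 1 < 4*x then 2*x+e + 1 else 0) = 2*x+e+1" using assms by simp
  have i4: "(if 3*x \<le> 2*x+e then 2*x+e - 3*x else 2*x+e + x) = 3*x+e" using assms by simp
  have o: "Occ x (2*x+e) = {pos (2*x+e) 0, pos (x+e) 1, pos e 2, pos (2*x+e+1) 3, pos (3*x+e) 4}"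
    by (simp only: Occ_def i1 i2 i3 i4)
  show ?thesis unfolding o using r2[OF assms] by blast
qed

lemma zc3: assumes "2 \<le> x" "e + 1 < x"
  shows "Cnd (A0 x) (Occ x (3*x+e)) \<and> Cnd (Occ x (3*x+e)) (A0 x) \<longleftrightarrow> e = 0"
proof -
  have i1: "(if x \<le> 3*x+e then 3*x+e - x else 3*x+e + 3*x) = 2*x+e" using assms by simp
  have i2: "(if 2*x \<le> 3*x+e then 3*x+e - 2*x else 3*x+e + 2*x) = x+e" using assms by simp
  have i3: "(if 3*x+e + 1 < 4*x then 3*x+e + 1 else 0) = 3*x+e+1" using assms by simp
  have i4: "(if 3*x \<le> 3*x+e then 3*x+e - 3*x else 3*x+e + x) = e" using assms by simp
  have o: "Occ x (3*x+e) = {pos (3*x+e) 0, pos (2*x+e) 1, pos (x+e) 2, pos (3*x+e+1) 3, pos e 4}"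
    by (simp only: Occ_def i1 i2 i3 i4)
  show ?thesis unfolding o using r3[OF assms] by blast
qed

lemma zc4: assumes "1 \<le> y"
  shows "Cnd (A0 (y+1)) (Occ (y+1) (4*y+3)) \<and> Cnd (Occ (y+1) (4*y+3)) (A0 (y+1))"
proof -
  have i1: "(if y+1 \<le> 4*y+3 then 4*y+3 - (y+1) else 4*y+3 + 3*(y+1)) = 3*y+2" by simp
  have i2: "(if 2*(y+1) \<le> 4*y+3 then 4*y+3 - 2*(y+1) else 4*y+3 + 2*(y+1)) = 2*y+1" by simp
  have i3: "(if 4*y+3 + 1 < 4*(y+1) then 4*y+3 + 1 else 0) = 0" by simp
  have i4: "(if 3*(y+1) \<le> 4*y+3 then 4*y+3 - 3*(y+1) else 4*y+3 + (y+1)) = y" using assms by simp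
  have o: "Occ (y+1) (4*y+3) = {pos (4*y+3) 0, pos (3*y+2) 1, pos (2*y+1) 2, pos 0 3, pos y 4}"
    by (simp only: Occ_def i1 i2 i3 i4)
  show ?thesis unfolding o using r4[OF assms] by blast
qed

lemma zero_case: assumes "2 \<le> x" "0 < d" "d < 4*x"
  shows "alternates (W x) 0 d \<longleftrightarrow> (d = 1 \<or> d = x \<or> d = 2*x \<or> d = 3*x \<or> d + 1 = 4*x)"
proof (cases "d < x")
  case True
  have "Cnd (A0 x) (Occ x d) \<and> Cnd (Occ x d) (A0 x) \<longleftrightarrow> d = 1" by (rule zc0[OF assms(1,2) True])
  then show ?thesis using True zc_first[OF assms] by simp
next
  case F1: False
  show ?thesis
  proof (cases "d < 2*x")
    case True
    define e where "e = d - x"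
    have h: "d = x+e" "e < x" using F1 True unfolding e_def by simp_all
    show ?thesis unfolding zc_first[OF assms] unfolding h(1) zc1[OF assms(1) h(2)] using h assms by simp
  next
    case F2: False
    show ?thesis
    proof (cases "d < 3*x")
      case True
      define e where "e = d - 2*x"
      have h: "d = 2*x+e" "e < x" using F2 True unfolding e_def by simp_all
      show ?thesis unfolding zc_first[OF assms] unfolding h(1) zc2[OF assms(1) h(2)] using h assms by simp
    next
      case F3: False
      show ?thesis
      proof (cases "d + 1 < 4*x")
        case True
        define e where "e = d - 3*x"
        have h: "d = 3*x+e" "e + 1 < x" using F3 True unfolding e_def by simp_all
        show ?thesis unfolding zc_first[OF assms] unfolding h(1) zc3[OF assms(1) h(2)] using h assms by simp
      next
        case False
        define y where "y = x - 1"
        have h: "x = y+1" "d = 4*y+3" using False assms unfolding y_def by simp_all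
        have y1: "1 \<le> y" using assms unfolding y_def by simp
        show ?thesis unfolding zc_first[OF assms] unfolding h using zc4[OF y1] by simp
      qed
    qed
  qed
qed

lemma min_aux: fixes x t :: nat assumes "2 \<le> x" "0 < t" "t < 4*x"
  shows "min t (4*x - t) \<in> {1, x, 2*x} \<longleftrightarrow> (t = 1 \<or> t = x \<or> t = 2*x \<or> t = 3*x \<or> t + 1 = 4*x)"
proof (cases "t \<le> 4*x - t")
  case True
  then have "min t (4*x - t) = t" by simp
  then show ?thesis using True assms by auto
next
  case False
  then have "min t (4*x - t) = 4*x - t" by simp
  then show ?thesis using False assms by auto
qed

lemma flip_aux: fixes x t :: nat assumes "0 < t" "t < 4*x"
  shows "(t = 1 \<or> t = x \<or> t = 2*x \<or> t = 3*x \<or> t + 1 = 4*x) \<longleftrightarrow>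
         (4*x - t = 1 \<or> 4*x - t = x \<or> 4*x - t = 2*x \<or> 4*x - t = 3*x \<or> 4*x - t + 1 = 4*x)"
  using assms by arith

lemma adj_iff: assumes "2 \<le> x" "a < 4*x" "b < 4*x" "a \<noteq> b"
  shows "circ_adj (4*x) {1, x, 2*x} a b \<longleftrightarrow>
    (let d = (b + 4*x - a) mod (4*x) in d = 1 \<or> d = x \<or> d = 2*x \<or> d = 3*x \<or> d + 1 = 4*x)"
proof (cases "a < b")
  case True
  have d_eq: "(b + 4*x - a) mod (4*x) = b - a"
  proof -
    have "(b + 4*x - a) mod (4*x) = (if b + 4*x - a < 4*x then b + 4*x - a else b + 4*x - a - 4*x)"
      using assms by (intro mod_lt2) auto
    then show ?thesis using True by simp
  qed
  have "circ_adj (4*x) {1, x, 2*x} a b \<longleftrightarrow> min (b - a) (4*x - (b - a)) \<in> {1, x, 2*x}"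
    unfolding circ_adj_def Let_def using assms True by simp
  also have "\<dots> \<longleftrightarrow> (b - a = 1 \<or> b - a = x \<or> b - a = 2*x \<or> b - a = 3*x \<or> b - a + 1 = 4*x)"
    using min_aux[OF assms(1), of "b - a"] True assms by simp
  finally show ?thesis unfolding d_eq Let_def .
next
  case False
  then have ba: "b < a" using assms(4) by simp
  have d_eq: "(b + 4*x - a) mod (4*x) = 4*x - (a - b)"
  proof -
    have "(b + 4*x - a) mod (4*x) = (if b + 4*x - a < 4*x then b + 4*x - a else b + 4*x - a - 4*x)"
      using assms by (intro mod_lt2) auto
    then show ?thesis using ba assms by simp
  qed
  have "circ_adj (4*x) {1, x, 2*x} a b \<longleftrightarrow> min (a - b) (4*x - (a - b)) \<in> {1, x, 2*x}"
    unfolding circ_adj_def Let_def using assms ba by simp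
  also have "\<dots> \<longleftrightarrow> (a - b = 1 \<or> a - b = x \<or> a - b = 2*x \<or> a - b = 3*x \<or> a - b + 1 = 4*x)"
    using min_aux[OF assms(1), of "a - b"] ba assms by simp
  also have "\<dots> \<longleftrightarrow> (let d = 4*x - (a - b) in d = 1 \<or> d = x \<or> d = 2*x \<or> d = 3*x \<or> d + 1 = 4*x)"
    unfolding Let_def using flip_aux[of "a - b" x] ba assms by simp
  finally show ?thesis unfolding d_eq .
qed

lemma d_pos: fixes a b x :: nat assumes "a < 4*x" "b < 4*x" "a \<noteq> b"
  shows "0 < (b + 4*x - a) mod (4*x)" "(b + 4*x - a) mod (4*x) < 4*x"
proof -
  have e: "(b + 4*x - a) mod (4*x) = (if b + 4*x - a < 4*x then b + 4*x - a else b + 4*x - a - 4*x)"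
    using assms by (intro mod_lt2) auto
  show "0 < (b + 4*x - a) mod (4*x)" unfolding e using assms by auto
  show "(b + 4*x - a) mod (4*x) < 4*x" using assms by simp
qed

theorem theorem28:
  fixes n x :: nat
  assumes "1 < x" and "x < n" and "2 * x = n"
  shows "word_representable (circ_vertices (2 * n)) (circ_adj (2 * n) {1, x, n})
       \<and> rep_number (circ_vertices (2 * n)) (circ_adj (2 * n) {1, x, n}) \<le> 5"
proof -
  have x2: "2 \<le> x" using assms(1) by simp
  have m: "2 * n = 4 * x" using assms(3) by simp
  have V: "circ_vertices (2 * n) = {0..<4*x}" unfolding m by (simp add: circ_vertices_def)
  have E: "circ_adj (2 * n) {1, x, n} = circ_adj (4*x) {1, x, 2*x}" unfolding m using assms(3) by simp
  have rep: "represents (circ_vertices (2 * n)) (circ_adj (2 * n) {1, x, n}) (W x)"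
    unfolding represents_def V E
  proof (intro conjI ballI impI)
    show "set (W x) = {0..<4*x}" by (rule set_W[OF x2])
    fix a b assume ab: "a \<in> {0..<4*x}" "b \<in> {0..<4*x}" "a \<noteq> b"
    then have a: "a < 4*x" and b: "b < 4*x" by auto
    show "circ_adj (4*x) {1, x, 2*x} a b \<longleftrightarrow> alternates (W x) a b"
      unfolding adj_iff[OF x2 a b ab(3)] alt_shift[OF x2 a b ab(3)] Let_def
      using zero_case[OF x2 d_pos[OF a b ab(3)]] by simp
  qed
  have uni: "k_uniform 5 (W x)"
    unfolding k_uniform_def set_W[OF x2] using count_W[OF x2] by simp
  have kr: "k_representable 5 (circ_vertices (2 * n)) (circ_adj (2 * n) {1, x, n})"
    unfolding k_representable_def using rep uni by blast
  have "word_representable (circ_vertices (2 * n)) (circ_adj (2 * n) {1, x, n})"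
    unfolding word_representable_def using rep by blast
  moreover have "rep_number (circ_vertices (2 * n)) (circ_adj (2 * n) {1, x, n}) \<le> 5"
    unfolding rep_number_def using kr by (rule Least_le)
  ultimately show ?thesis by blast
qed

end
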